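(* Let $A\in\mathbb{R}^{n\times n}$, $B\in\mathbb{R}^{n\times m}$ with $(A,B)$ stabilizable, $Q\succ0$, $R\succ0$, $\gamma,\eta\ge0$, $x_k\in\mathbb{R}^n$, and let $\tilde P,V,J_k,P_1,q_1,r_1$ be as in the context. For every $\alpha>1$, the problem (P1) — minimize over $F_k\in\mathbb{R}^{m\times n}$, $\delta_k$ the objective $-\delta_k+\gamma\|F_k\|_0+\eta\|F_kx_k\|_0$ subject to $J_k(F_k,\xi;x_k)\le\alpha\big(V(x_k)-V(x(t_k+\xi))\big)$ for all $\xi\in[0,\delta_k]$ — and its relaxation (P3) — minimize over $f_k\in\mathbb{R}^{mn}$, $\delta_k$ the objective $-\delta_k+\gamma\|f_k\|_1+\eta\|(x_k^T\otimes I)f_k\|_1$ subject to $\tfrac12f_k^TP_1(\xi)f_k+q_1(\xi)^Tf_k+r_1(\xi)\le0$ for all $\xi\in[0,\delta_k]$ — are feasible.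
   Context: $\tilde F$ is a fixed gain with $A+B\tilde F$ Hurwitz and $\tilde P\succ0$ solves $(A+B\tilde F)^T\tilde P+\tilde P(A+B\tilde F)+Q+\tilde F^TR\tilde F=0$; $V(x):=x^T\tilde Px$. $x(t_k+\xi)$ is the solution of $\dot x=Ax+Bu$ from $x(t_k)=x_k$ with held input $u=F_kx_k$, and $J_k(F_k,\xi;x_k):=\int_{t_k}^{t_k+\xi}(x^TQx+u^TRu)dt$. $Z(\tau):=\int_0^\tau e^{-As}ds$, $H_0(\xi):=\int_0^\xi e^{A^T\tau}Qe^{A\tau}d\tau$, $H_1(\xi):=\int_0^\xi e^{A^T\tau}Qe^{A\tau}Z(\tau)Bd\tau$, $H_2(\xi):=\int_0^\xi(e^{A\tau}Z(\tau)B)^TQ(e^{A\tau}Z(\tau)B)d\tau+\xi R$; $P_1(\xi):=2(x_kx_k^T)\otimes(H_2(\xi)+\alpha B^TZ(\xi)^Te^{A^T\xi}\tilde Pe^{A\xi}Z(\xi)B)$, $q_1(\xi):=2\mathrm{vec}((H_1(\xi)^T+\alpha B^TZ(\xi)^Te^{A^T\xi}\tilde Pe^{A\xi})x_kx_k^T)$, $r_1(\xi):=x_k^T(H_0(\xi)+\alpha(e^{A^T\xi}\tilde Pe^{A\xi}-\tilde P))x_k$; $f_k=\mathrm{vec}(F_k)$. $\|\cdot\|_0$ counts nonzero entries and $\|\cdot\|_1$ sums absolute values of entries. *)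

theory Defs
  imports "HOL-Analysis.Analysis"
begin

text \<open>Matrices are Cartesian: a p-by-q real matrix has type real^'q^'p.\<close>

primrec mpow :: "real^'n^'n \<Rightarrow> nat \<Rightarrow> real^'n^'n" where
  "mpow M 0 = mat 1"
| "mpow M (Suc k) = M ** mpow M k"

definition mexp :: "real^'n^'n \<Rightarrow> real^'n^'n" where
  "mexp M = (\<Sum>k. (1 / fact k) *\<^sub>R mpow M k)"

definition cmat :: "real^'n^'n \<Rightarrow> complex^'n^'n" where
  "cmat M = (\<chi> i j. complex_of_real (M $ i $ j))"

definition hurwitz :: "real^'n^'n \<Rightarrow> bool" where
  "hurwitz M \<longleftrightarrow> (\<forall>(ev::complex) (v::complex^'n). v \<noteq> 0 \<and> cmat M *v v = ev *s v \<longrightarrow> Re ev < 0)"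

definition stabilizable :: "real^'n^'n \<Rightarrow> real^'m^'n \<Rightarrow> bool" where
  "stabilizable A B \<longleftrightarrow> (\<exists>F::real^'n^'m. hurwitz (A + B ** F))"

definition pos_def :: "real^'n^'n \<Rightarrow> bool" where
  "pos_def M \<longleftrightarrow> transpose M = M \<and> (\<forall>x. x \<noteq> 0 \<longrightarrow> x \<bullet> (M *v x) > 0)"

text \<open>Solution of dx/dt = A x + B u with constant input u and x(0) = x0
  (time measured relative to t_k).\<close>
definition traj :: "real^'n^'n \<Rightarrow> real^'m^'n \<Rightarrow> real^'n \<Rightarrow> real^'m \<Rightarrow> real \<Rightarrow> real^'n" where
  "traj A B x0 u = (THE x. x 0 = x0 \<and> (\<forall>t. (x has_vector_derivative (A *v x t + B *v u)) (at t)))"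

definition Vfun :: "real^'n^'n \<Rightarrow> real^'n \<Rightarrow> real" where
  "Vfun Pt x = x \<bullet> (Pt *v x)"

definition Jcost :: "real^'n^'n \<Rightarrow> real^'m^'n \<Rightarrow> real^'n^'n \<Rightarrow> real^'m^'m \<Rightarrow> real^'n^'m \<Rightarrow> real \<Rightarrow> real^'n \<Rightarrow> real" where
  "Jcost A B Q R F \<xi> xk = integral {0..\<xi>}
     (\<lambda>t. traj A B xk (F *v xk) t \<bullet> (Q *v traj A B xk (F *v xk) t) + (F *v xk) \<bullet> (R *v (F *v xk)))"

definition feasible_P1 :: "real^'n^'n \<Rightarrow> real^'m^'n \<Rightarrow> real^'n^'n \<Rightarrow> real^'m^'m \<Rightarrow> real^'n^'n \<Rightarrow> real \<Rightarrow> real^'n \<Rightarrow> real^'n^'m \<Rightarrow> real \<Rightarrow> bool" where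
  "feasible_P1 A B Q R Pt \<alpha> xk F \<delta> \<longleftrightarrow>
     (\<forall>\<xi>\<in>{0..\<delta>}. Jcost A B Q R F \<xi> xk \<le> \<alpha> * (Vfun Pt xk - Vfun Pt (traj A B xk (F *v xk) \<xi>)))"

definition Zm :: "real^'n^'n \<Rightarrow> real \<Rightarrow> real^'n^'n" where
  "Zm A \<tau> = integral {0..\<tau>} (\<lambda>s. mexp ((- s) *\<^sub>R A))"

definition H0 :: "real^'n^'n \<Rightarrow> real^'n^'n \<Rightarrow> real \<Rightarrow> real^'n^'n" where
  "H0 A Q \<xi> = integral {0..\<xi>} (\<lambda>\<tau>. mexp (\<tau> *\<^sub>R transpose A) ** Q ** mexp (\<tau> *\<^sub>R A))"

definition H1 :: "real^'n^'n \<Rightarrow> real^'m^'n \<Rightarrow> real^'n^'n \<Rightarrow> real \<Rightarrow> real^'m^'n" where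
  "H1 A B Q \<xi> = integral {0..\<xi>} (\<lambda>\<tau>. mexp (\<tau> *\<^sub>R transpose A) ** Q ** mexp (\<tau> *\<^sub>R A) ** Zm A \<tau> ** B)"

definition H2 :: "real^'n^'n \<Rightarrow> real^'m^'n \<Rightarrow> real^'n^'n \<Rightarrow> real^'m^'m \<Rightarrow> real \<Rightarrow> real^'m^'m" where
  "H2 A B Q R \<xi> = integral {0..\<xi>}
     (\<lambda>\<tau>. transpose (mexp (\<tau> *\<^sub>R A) ** Zm A \<tau> ** B) ** Q ** (mexp (\<tau> *\<^sub>R A) ** Zm A \<tau> ** B))
     + \<xi> *\<^sub>R R"

text \<open>vec: column stacking; index (j,i) = column j, row i.\<close>
definition vecm :: "real^'n^'m \<Rightarrow> real^('n \<times> 'm)" where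
  "vecm F = (\<chi> p. F $ snd p $ fst p)"

text \<open>Kronecker product; row index (i1,i2), column index (j1,j2).\<close>
definition kron :: "real^'a^'b \<Rightarrow> real^'c^'d \<Rightarrow> real^('a \<times> 'c)^('b \<times> 'd)" where
  "kron M N = (\<chi> p q. M $ fst p $ fst q * N $ snd p $ snd q)"

definition outer :: "real^'n \<Rightarrow> real^'n^'n" where
  "outer x = (\<chi> i j. x $ i * x $ j)"

definition rowv :: "real^'n \<Rightarrow> real^'n^1" where
  "rowv x = (\<chi> i j. x $ j)"

definition P1m :: "real^'n^'n \<Rightarrow> real^'m^'n \<Rightarrow> real^'n^'n \<Rightarrow> real^'m^'m \<Rightarrow> real^'n^'n \<Rightarrow> real \<Rightarrow> real^'n \<Rightarrow> real \<Rightarrow> real^('n \<times> 'm)^('n \<times> 'm)" where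
  "P1m A B Q R Pt \<alpha> xk \<xi> = 2 *\<^sub>R kron (outer xk)
     (H2 A B Q R \<xi> + \<alpha> *\<^sub>R (transpose B ** transpose (Zm A \<xi>) ** mexp (\<xi> *\<^sub>R transpose A) ** Pt ** mexp (\<xi> *\<^sub>R A) ** Zm A \<xi> ** B))"

definition q1v :: "real^'n^'n \<Rightarrow> real^'m^'n \<Rightarrow> real^'n^'n \<Rightarrow> real^'n^'n \<Rightarrow> real \<Rightarrow> real^'n \<Rightarrow> real \<Rightarrow> real^('n \<times> 'm)" where
  "q1v A B Q Pt \<alpha> xk \<xi> = 2 *\<^sub>R vecm ((transpose (H1 A B Q \<xi>)
     + \<alpha> *\<^sub>R (transpose B ** transpose (Zm A \<xi>) ** mexp (\<xi> *\<^sub>R transpose A) ** Pt ** mexp (\<xi> *\<^sub>R A))) ** outer xk)"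

definition r1v :: "real^'n^'n \<Rightarrow> real^'n^'n \<Rightarrow> real^'n^'n \<Rightarrow> real \<Rightarrow> real^'n \<Rightarrow> real \<Rightarrow> real" where
  "r1v A Q Pt \<alpha> xk \<xi> = xk \<bullet> ((H0 A Q \<xi> + \<alpha> *\<^sub>R (mexp (\<xi> *\<^sub>R transpose A) ** Pt ** mexp (\<xi> *\<^sub>R A) - Pt)) *v xk)"

definition feasible_P3 :: "real^'n^'n \<Rightarrow> real^'m^'n \<Rightarrow> real^'n^'n \<Rightarrow> real^'m^'m \<Rightarrow> real^'n^'n \<Rightarrow> real \<Rightarrow> real^'n \<Rightarrow> real^('n \<times> 'm) \<Rightarrow> real \<Rightarrow> bool" where
  "feasible_P3 A B Q R Pt \<alpha> xk f \<delta> \<longleftrightarrow>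
     (\<forall>\<xi>\<in>{0..\<delta>}. (1/2) * (f \<bullet> (P1m A B Q R Pt \<alpha> xk \<xi> *v f)) + q1v A B Q Pt \<alpha> xk \<xi> \<bullet> f + r1v A Q Pt \<alpha> xk \<xi> \<le> 0)"

text \<open>Objectives (do not affect feasibility).\<close>
definition l0m :: "real^'n^'m \<Rightarrow> nat" where
  "l0m F = card {(i, j). F $ i $ j \<noteq> 0}"
definition l0v :: "real^'n \<Rightarrow> nat" where
  "l0v x = card {i. x $ i \<noteq> 0}"
definition l1v :: "real^'n \<Rightarrow> real" where
  "l1v x = (\<Sum>i\<in>UNIV. \<bar>x $ i\<bar>)"

definition obj_P1 :: "real \<Rightarrow> real \<Rightarrow> real^'n \<Rightarrow> real^'n^'m \<Rightarrow> real \<Rightarrow> real" where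
  "obj_P1 \<gamma> \<eta> xk F \<delta> = - \<delta> + \<gamma> * real (l0m F) + \<eta> * real (l0v (F *v xk))"

definition obj_P3 :: "real \<Rightarrow> real \<Rightarrow> real^'n \<Rightarrow> real^('n::finite \<times> 'm::finite) \<Rightarrow> real \<Rightarrow> real" where
  "obj_P3 \<gamma> \<eta> xk f \<delta> = - \<delta> + \<gamma> * l1v f + \<eta> * l1v (kron (rowv xk) (mat 1 :: real^'m^'m) *v f)"

end

theory Submission
  imports Defs
begin

lemma bb_mm: "bounded_bilinear ((**) :: real^'n^'m \<Rightarrow> real^'p^'n \<Rightarrow> real^'p^'m)"
proof -
  have "bilinear ((**) :: real^'n^'m \<Rightarrow> real^'p^'n \<Rightarrow> real^'p^'m)"
    unfolding bilinear_def
    by (auto intro!: linearI simp: vec_eq_iff matrix_matrix_mult_def sum.distrib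
        sum_distrib_left algebra_simps)
  then show ?thesis using bilinear_conv_bounded_bilinear by blast
qed

lemma bl_transpose: "bounded_linear (transpose :: real^'n^'m \<Rightarrow> real^'m^'n)"
proof -
  have "linear (transpose :: real^'n^'m \<Rightarrow> real^'m^'n)"
    by (auto intro!: linearI simp: vec_eq_iff transpose_def)
  then show ?thesis using linear_conv_bounded_linear by blast
qed

lemma mm_scaleR_left: "(c *\<^sub>R X) ** Y = c *\<^sub>R (X ** (Y::real^'p^'n))" for X :: "real^'n^'m"
  using bounded_bilinear.scaleR_left[OF bb_mm] by blast
lemma mm_scaleR_right: "X ** (c *\<^sub>R Y) = c *\<^sub>R (X ** (Y::real^'p^'n))" for X :: "real^'n^'m"
  using bounded_bilinear.scaleR_right[OF bb_mm] by blast

lemma mpow_scaleR: "mpow (t *\<^sub>R M) k = t^k *\<^sub>R mpow M k"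
  by (induction k) (auto simp: mm_scaleR_left mm_scaleR_right)

lemma mpow_bound: "\<exists>c C. c \<ge> 0 \<and> C \<ge> 0 \<and> (\<forall>k. norm (mpow (M::real^'n^'n) k) \<le> c * C^k)"
proof -
  obtain K where K: "K > 0" "\<And>a b. norm ((a::real^'n^'n) ** (b::real^'n^'n)) \<le> norm a * norm b * K"
    using bounded_bilinear.pos_bounded[OF bb_mm] by blast
  have "norm (mpow M k) \<le> norm (mat 1 :: real^'n^'n) * (norm M * K)^k" for k
  proof (induction k)
    case 0 then show ?case by simp
  next
    case (Suc k)
    have "norm (mpow M (Suc k)) \<le> norm M * norm (mpow M k) * K" using K(2) by simp
    also have "\<dots> \<le> norm M * (norm (mat 1 :: real^'n^'n) * (norm M * K)^k) * K"
      using Suc K(1) by (intro mult_right_mono mult_left_mono) auto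
    finally show ?case by (simp add: algebra_simps)
  qed
  then show ?thesis using K(1) by (intro exI[of _ "norm (mat 1 :: real^'n^'n)"] exI[of _ "norm M * K"]) auto
qed

definition eterm :: "real^'n^'n \<Rightarrow> nat \<Rightarrow> real \<Rightarrow> real^'n^'n" where
  "eterm M k t = (t^k / fact k) *\<^sub>R mpow M k"
definition dterm :: "real^'n^'n \<Rightarrow> nat \<Rightarrow> real \<Rightarrow> real^'n^'n" where
  "dterm M k t = (real k * t^(k-1) / fact k) *\<^sub>R mpow M k"

lemma mexp_sums: "(\<lambda>k. eterm M k t) sums mexp (t *\<^sub>R M)"
proof -
  obtain c C where cC: "c \<ge> 0" "C \<ge> 0" "\<And>k. norm (mpow M k) \<le> c * C^k"
    using mpow_bound by blast
  have "summable (\<lambda>k. eterm M k t)"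
  proof (rule summable_comparison_test')
    show "summable (\<lambda>k. c * (inverse (fact k) * (\<bar>t\<bar> * C)^k))"
      by (intro summable_mult summable_exp)
    fix k :: nat
    have "norm (eterm M k t) = (\<bar>t\<bar>^k / fact k) * norm (mpow M k)"
      by (simp add: eterm_def power_abs)
    also have "\<dots> \<le> (\<bar>t\<bar>^k / fact k) * (c * C^k)"
      using cC by (intro mult_left_mono) auto
    also have "\<dots> = c * (inverse (fact k) * (\<bar>t\<bar> * C)^k)"
      by (simp add: power_mult_distrib field_simps)
    finally show "norm (eterm M k t) \<le> c * (inverse (fact k) * (\<bar>t\<bar> * C)^k)" .
  qed
  moreover have "mexp (t *\<^sub>R M) = (\<Sum>k. eterm M k t)"
    by (simp add: mexp_def eterm_def mpow_scaleR)
  ultimately show ?thesis by (simp add: summable_sums)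
qed



lemma eterm_deriv: "((\<lambda>t. eterm M k t) has_vector_derivative dterm M k t) (at t within S)"
proof -
  have "((\<lambda>t. t^k / fact k) has_real_derivative (real k * t^(k-1) / fact k)) (at t within S)"
    by (auto intro!: derivative_eq_intros)
  then have "((\<lambda>t. (t^k / fact k) *\<^sub>R mpow M k) has_vector_derivative
      ((t^k / fact k) *\<^sub>R 0 + (real k * t^(k-1) / fact k) *\<^sub>R mpow M k)) (at t within S)"
    by (intro has_vector_derivative_scaleR has_vector_derivative_const)
  then show ?thesis by (simp add: eterm_def dterm_def)
qed

lemma dterm_sums: "(\<lambda>k. dterm M k t) sums (M ** mexp (t *\<^sub>R M))"
proof -
  have bl: "bounded_linear (\<lambda>X. M ** X)"
    using bounded_bilinear.bounded_linear_right[OF bb_mm] .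
  have "(\<lambda>k. M ** eterm M k t) sums (M ** mexp (t *\<^sub>R M))"
    using bounded_linear.sums[OF bl mexp_sums] .
  moreover have "M ** eterm M k t = dterm M (Suc k) t" for k
  proof -
    have "real (Suc k) * t^k / fact (Suc k) = t^k / fact k"
      by (simp add: fact_Suc del: of_nat_Suc)
    then show ?thesis by (simp add: eterm_def dterm_def mm_scaleR_right)
  qed
  ultimately have "(\<lambda>k. dterm M (Suc k) t) sums (M ** mexp (t *\<^sub>R M))" by simp
  moreover have "dterm M 0 t = 0" by (simp add: dterm_def)
  ultimately show ?thesis using sums_Suc_iff[of "\<lambda>k. dterm M k t"] by simp
qed

lemma mexp_deriv: "((\<lambda>t. mexp (t *\<^sub>R M)) has_vector_derivative (M ** mexp (t *\<^sub>R M))) (at t)"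
proof -
  obtain c C where cC: "c \<ge> 0" "C \<ge> 0" "\<And>k. norm (mpow M k) \<le> c * C^k"
    using mpow_bound by blast
  define r where "r = \<bar>t\<bar> + 1"
  have r: "r \<ge> 1" "t \<in> ball 0 r" by (auto simp: r_def)
  define Mb where "Mb k = c * (real k * r^(k-1) / fact k * C^k)" for k
  have "summable (\<lambda>k. Mb (Suc k))"
  proof -
    have "Mb (Suc k) = c * C * (inverse (fact k) * (r * C)^k)" for k
    proof -
      have "real (Suc k) * r^k / fact (Suc k) = r^k / fact k"
        by (simp add: fact_Suc del: of_nat_Suc)
      then show ?thesis unfolding Mb_def diff_Suc_1
        by (simp add: power_mult_distrib divide_inverse mult_ac)
    qed
    then show ?thesis by (simp add: summable_mult summable_exp)
  qed
  then have sMb: "summable Mb" by (simp add: summable_Suc_iff)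
  have bnd: "\<forall>x\<in>ball 0 r. norm (dterm M k x) \<le> Mb k" for k
  proof
    fix x :: real assume x: "x \<in> ball 0 r"
    then have ax: "\<bar>x\<bar> \<le> r" by auto
    have "norm (dterm M k x) = (real k * \<bar>x\<bar>^(k-1) / fact k) * norm (mpow M k)"
      by (simp add: dterm_def power_abs abs_mult)
    also have "\<dots> \<le> (real k * r^(k-1) / fact k) * (c * C^k)"
      using cC ax by (intro mult_mono divide_right_mono mult_left_mono power_mono) auto
    finally show "norm (dterm M k x) \<le> Mb k" by (simp add: Mb_def mult_ac)
  qed
  have ul: "uniform_limit (ball 0 r) (\<lambda>n x. \<Sum>i<n. dterm M i x) (\<lambda>x. \<Sum>i. dterm M i x) sequentially"
    by (rule Weierstrass_m_test_ev[OF _ sMb]) (use bnd in auto)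
  have "\<exists>g. \<forall>x\<in>ball 0 r. (\<lambda>n. eterm M n x) sums (g x) \<and>
      (g has_derivative (\<lambda>h. h *\<^sub>R (\<Sum>i. dterm M i x))) (at x within ball 0 r)"
  proof (rule has_derivative_series[where f' = "\<lambda>n x h. h *\<^sub>R dterm M n x"])
    show "convex (ball (0::real) r)" by simp
    show "\<And>n x. x \<in> ball 0 r \<Longrightarrow> (eterm M n has_derivative (\<lambda>h. h *\<^sub>R dterm M n x)) (at x within ball 0 r)"
      using eterm_deriv unfolding has_vector_derivative_def by blast
    show "t \<in> ball 0 r" by (rule r(2))
    show "(\<lambda>n. eterm M n t) sums mexp (t *\<^sub>R M)" by (rule mexp_sums)
  next
    fix e :: real assume e: "e > 0"
    from ul[unfolded uniform_limit_iff, rule_format, OF e]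
    show "\<forall>\<^sub>F n in sequentially. \<forall>x\<in>ball 0 r. \<forall>h. norm ((\<Sum>i<n. h *\<^sub>R dterm M i x) - h *\<^sub>R (\<Sum>i. dterm M i x)) \<le> e * norm h"
    proof eventually_elim
      case (elim n)
      show ?case
      proof (intro ballI allI)
        fix x h :: real assume x: "x \<in> ball 0 r"
        have "norm ((\<Sum>i<n. h *\<^sub>R dterm M i x) - h *\<^sub>R (\<Sum>i. dterm M i x))
            = \<bar>h\<bar> * norm ((\<Sum>i<n. dterm M i x) - (\<Sum>i. dterm M i x))"
        proof -
          have "(\<Sum>i<n. h *\<^sub>R dterm M i x) - h *\<^sub>R (\<Sum>i. dterm M i x)
              = h *\<^sub>R ((\<Sum>i<n. dterm M i x) - (\<Sum>i. dterm M i x))"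
            by (simp add: scaleR_sum_right scaleR_diff_right)
          then show ?thesis by simp
        qed
        also have "\<dots> \<le> \<bar>h\<bar> * e"
        proof -
          have "dist (\<Sum>i<n. dterm M i x) (\<Sum>i. dterm M i x) < e" using elim x by blast
          then show ?thesis by (intro mult_left_mono) (auto simp: dist_norm)
        qed
        finally show "norm ((\<Sum>i<n. h *\<^sub>R dterm M i x) - h *\<^sub>R (\<Sum>i. dterm M i x)) \<le> e * norm h"
          by (simp add: mult_ac)
      qed
    qed
  qed
  then obtain g where g: "\<And>x. x \<in> ball 0 r \<Longrightarrow> (\<lambda>n. eterm M n x) sums (g x)"
    "\<And>x. x \<in> ball 0 r \<Longrightarrow> (g has_derivative (\<lambda>h. h *\<^sub>R (\<Sum>i. dterm M i x))) (at x within ball 0 r)"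
    by blast
  have geq: "\<And>x. x \<in> ball 0 r \<Longrightarrow> g x = mexp (x *\<^sub>R M)"
    using g(1) mexp_sums sums_unique2 by blast
  have "(g has_derivative (\<lambda>h. h *\<^sub>R (\<Sum>i. dterm M i t))) (at t)"
    using g(2)[OF r(2)] by (simp add: at_within_open[OF r(2)])
  then have "((\<lambda>x. mexp (x *\<^sub>R M)) has_derivative (\<lambda>h. h *\<^sub>R (\<Sum>i. dterm M i t))) (at t)"
    by (rule has_derivative_transform_within_open[OF _ open_ball r(2)]) (use geq in auto)
  moreover have "(\<Sum>i. dterm M i t) = M ** mexp (t *\<^sub>R M)"
    using dterm_sums sums_unique by metis
  ultimately show ?thesis by (simp add: has_vector_derivative_def)
qed

lemma mexp_cont: "continuous_on S (\<lambda>t. mexp (t *\<^sub>R M))"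
  by (rule continuous_at_imp_continuous_on) (use mexp_deriv has_vector_derivative_continuous in blast)

lemma mexp_zero: "mexp (0 *\<^sub>R M) = mat 1"
proof -
  have "(\<lambda>k. eterm M k 0) = (\<lambda>k. if k = 0 then eterm M k 0 else 0)"
    by (auto simp: eterm_def fun_eq_iff)
  then have "(\<lambda>k. eterm M k 0) sums eterm M 0 0" using sums_single[of 0 "\<lambda>k. eterm M k 0"] by metis
  moreover have "eterm M 0 0 = mat 1" by (simp add: eterm_def)
  ultimately show ?thesis using mexp_sums[of M 0] sums_unique2 by metis
qed



lemma ode_unique:
  fixes y z :: "real \<Rightarrow> real^'n" and A :: "real^'n^'n"
  assumes y: "\<And>t. (y has_vector_derivative (A *v y t + c)) (at t)"
      and z: "\<And>t. (z has_vector_derivative (A *v z t + c)) (at t)"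
      and y0: "y 0 = z 0"
  shows "y t = z t"
proof -
  define d where "d t = y t - z t" for t
  have d': "(d has_vector_derivative (A *v d t)) (at t)" for t
  proof -
    have "((\<lambda>t. y t - z t) has_vector_derivative (A *v y t + c) - (A *v z t + c)) (at t)"
      using has_vector_derivative_diff[OF y z] .
    then show ?thesis unfolding d_def[abs_def] by (simp add: matrix_vector_mult_diff_distrib)
  qed
  obtain K where K: "K \<ge> 0" "\<And>v. norm (A *v v) \<le> norm v * K"
    using bounded_linear.nonneg_bounded[OF matrix_vector_mul_bounded_linear[of A]] by blast
  have ip: "d s \<bullet> (A *v d s) \<le> K * (d s \<bullet> d s)" for s
  proof -
    have "d s \<bullet> (A *v d s) \<le> norm (d s) * norm (A *v d s)"
      using Cauchy_Schwarz_ineq2 abs_le_iff by blast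
    also have "\<dots> \<le> norm (d s) * (norm (d s) * K)" using K by (intro mult_left_mono) auto
    also have "\<dots> = K * (d s \<bullet> d s)" by (simp add: power2_norm_eq_inner[symmetric] power2_eq_square)
    finally show ?thesis .
  qed
  have ip2: "- (d s \<bullet> (A *v d s)) \<le> K * (d s \<bullet> d s)" for s
  proof -
    have "- (d s \<bullet> (A *v d s)) \<le> norm (d s) * norm (A *v d s)"
      using Cauchy_Schwarz_ineq2 abs_le_iff by blast
    also have "\<dots> \<le> norm (d s) * (norm (d s) * K)" using K by (intro mult_left_mono) auto
    also have "\<dots> = K * (d s \<bullet> d s)" by (simp add: power2_norm_eq_inner[symmetric] power2_eq_square)
    finally show ?thesis .
  qed
  have dd: "((\<lambda>t. d t \<bullet> d t) has_real_derivative 2 * (d s \<bullet> (A *v d s))) (at s)" for s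
  proof -
    have "((\<lambda>t. d t \<bullet> d t) has_vector_derivative (d s \<bullet> (A *v d s) + (A *v d s) \<bullet> d s)) (at s)"
      using bounded_bilinear.has_vector_derivative[OF bounded_bilinear_inner d' d'] .
    then show ?thesis by (simp add: has_real_derivative_iff_has_vector_derivative inner_commute)
  qed
  have d0: "d 0 = 0" using y0 by (simp add: d_def)
  have "d t \<bullet> d t \<le> 0"
  proof (cases "t \<ge> 0")
    case True
    define h where "h s = exp (-(2*K) * s) * (d s \<bullet> d s)" for s
    have "h t \<le> h 0"
    proof (rule DERIV_nonpos_imp_nonincreasing[OF True])
      fix x :: real
      have e: "((\<lambda>s. exp (-(2*K) * s)) has_real_derivative exp (-(2*K)*x) * (-(2*K))) (at x)"
        by (auto intro!: derivative_eq_intros)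
      have "(h has_real_derivative (exp (-(2*K)*x) * (-(2*K)) * (d x \<bullet> d x) + 2 * (d x \<bullet> (A *v d x)) * exp (-(2*K)*x))) (at x)"
        unfolding h_def[abs_def] using DERIV_mult[OF e dd[of x]] by simp
      moreover have "exp (-(2*K)*x) * (-(2*K)) * (d x \<bullet> d x) + 2 * (d x \<bullet> (A *v d x)) * exp (-(2*K)*x)
          = exp (-(2*K)*x) * (2 * (d x \<bullet> (A *v d x)) - 2 * K * (d x \<bullet> d x))"
        by (simp add: algebra_simps)
      moreover have "exp (-(2*K)*x) * (2 * (d x \<bullet> (A *v d x)) - 2 * K * (d x \<bullet> d x)) \<le> 0"
        using ip[of x] by (intro mult_nonneg_nonpos) auto
      ultimately show "\<exists>y. (h has_real_derivative y) (at x) \<and> y \<le> 0" by metis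
    qed
    then have "exp (-(2*K)*t) * (d t \<bullet> d t) \<le> 0" by (simp add: h_def d0)
    then show ?thesis by (simp add: mult_le_0_iff)
  next
    case False
    define h where "h s = exp (2*K * s) * (d s \<bullet> d s)" for s
    have "h t \<le> h 0"
    proof (rule DERIV_nonneg_imp_nondecreasing[of t 0])
      show "t \<le> 0" using False by simp
    next
      fix x :: real
      have e: "((\<lambda>s. exp (2*K * s)) has_real_derivative exp (2*K*x) * (2*K)) (at x)"
        by (auto intro!: derivative_eq_intros)
      have "(h has_real_derivative (exp (2*K*x) * (2*K) * (d x \<bullet> d x) + 2 * (d x \<bullet> (A *v d x)) * exp (2*K*x))) (at x)"
        unfolding h_def[abs_def] using DERIV_mult[OF e dd[of x]] by simp
      moreover have "exp (2*K*x) * (2*K) * (d x \<bullet> d x) + 2 * (d x \<bullet> (A *v d x)) * exp (2*K*x)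
          = exp (2*K*x) * (2 * (d x \<bullet> (A *v d x)) + 2 * K * (d x \<bullet> d x))"
        by (simp add: algebra_simps)
      moreover have "exp (2*K*x) * (2 * (d x \<bullet> (A *v d x)) + 2 * K * (d x \<bullet> d x)) \<ge> 0"
        using ip2[of x] by (intro mult_nonneg_nonneg) auto
      ultimately show "\<exists>y. (h has_real_derivative y) (at x) \<and> y \<ge> 0" by metis
    qed
    then have "exp (2*K*t) * (d t \<bullet> d t) \<le> 0" by (simp add: h_def d0)
    then show ?thesis by (simp add: mult_le_0_iff)
  qed
  then have "d t = 0" by (meson inner_gt_zero_iff not_le)
  then show ?thesis by (simp add: d_def)
qed



lemma mexp_0: "mexp 0 = mat 1"
  using mexp_zero[of 0] by simp

definition aug :: "real^'n::finite^'n \<Rightarrow> real^'m::finite^'n \<Rightarrow> real^('n+'m)^('n+'m)" where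
  "aug A B = (\<chi> p q. case p of Inl i \<Rightarrow> (case q of Inl j \<Rightarrow> A$i$j | Inr j \<Rightarrow> B$i$j) | Inr _ \<Rightarrow> 0)"
definition augv :: "real^'n::finite \<Rightarrow> real^'m::finite \<Rightarrow> real^('n+'m)" where
  "augv x u = (\<chi> p. case p of Inl i \<Rightarrow> x$i | Inr j \<Rightarrow> u$j)"
definition topv :: "real^('n::finite+'m::finite) \<Rightarrow> real^'n" where "topv w = (\<chi> i. w $ Inl i)"
definition botv :: "real^('n::finite+'m::finite) \<Rightarrow> real^'m" where "botv w = (\<chi> j. w $ Inr j)"

lemma sum_UNIV_plus:
  "(\<Sum>p\<in>(UNIV::('a::finite+'b::finite) set). f p) = (\<Sum>i\<in>UNIV. f (Inl i)) + (\<Sum>j\<in>UNIV. f (Inr j))"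
proof -
  have "(\<Sum>p\<in>(UNIV::('a+'b) set). f p) = (\<Sum>p\<in>(UNIV <+> UNIV). f p)" by simp
  also have "\<dots> = (\<Sum>i\<in>UNIV. f (Inl i)) + (\<Sum>j\<in>UNIV. f (Inr j))"
    by (subst sum.Plus) (auto simp: o_def)
  finally show ?thesis .
qed

lemma aug_top: "topv (aug A B *v w) = A *v topv w + B *v botv w"
  by (simp add: vec_eq_iff topv_def botv_def aug_def matrix_vector_mult_def sum_UNIV_plus)

lemma aug_bot: "botv (aug A B *v w) = 0"
  by (simp add: vec_eq_iff botv_def aug_def matrix_vector_mult_def)

lemma topv_augv[simp]: "topv (augv x u) = x" by (simp add: vec_eq_iff topv_def augv_def)
lemma botv_augv[simp]: "botv (augv x u) = u" by (simp add: vec_eq_iff botv_def augv_def)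

lemma bl_topv: "bounded_linear topv"
proof -
  have "linear topv" by (auto intro!: linearI simp: vec_eq_iff topv_def)
  then show ?thesis using linear_conv_bounded_linear by blast
qed
lemma bl_botv: "bounded_linear botv"
proof -
  have "linear botv" by (auto intro!: linearI simp: vec_eq_iff botv_def)
  then show ?thesis using linear_conv_bounded_linear by blast
qed
lemma bl_mv: "bounded_linear (\<lambda>X::real^'n^'m. X *v v)"
proof -
  have "linear (\<lambda>X::real^'n^'m. X *v v)"
    by (auto intro!: linearI simp: vec_eq_iff matrix_vector_mult_def sum.distrib sum_distrib_left algebra_simps)
  then show ?thesis using linear_conv_bounded_linear by blast
qed

definition sol :: "real^'n^'n \<Rightarrow> real^'m^'n \<Rightarrow> real^'n \<Rightarrow> real^'m \<Rightarrow> real \<Rightarrow> real^'n" where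
  "sol A B x u t = topv (mexp (t *\<^sub>R aug A B) *v augv x u)"

lemma sol_deriv: "((\<lambda>t. sol A B x u t) has_vector_derivative (A *v sol A B x u t + B *v u)) (at t)"
proof -
  define W where "W t = mexp (t *\<^sub>R aug A B) *v augv x u" for t
  have W': "(W has_vector_derivative (aug A B *v W s)) (at s)" for s
    using bounded_linear.has_vector_derivative[OF bl_mv[of "augv x u"] mexp_deriv[of "aug A B" s]]
    by (simp add: W_def[abs_def] matrix_vector_mul_assoc)
  have "((\<lambda>t. botv (W t)) has_vector_derivative 0) (at s within UNIV)" for s
    using bounded_linear.has_vector_derivative[OF bl_botv W'[of s]] by (simp add: aug_bot)
  then obtain c where c: "\<And>s. botv (W s) = c"
    using has_vector_derivative_zero_constant[of UNIV "\<lambda>t. botv (W t)"] by auto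
  have "botv (W 0) = u" by (simp add: W_def mexp_0)
  then have bu: "botv (W s) = u" for s using c by metis
  have "((\<lambda>t. topv (W t)) has_vector_derivative topv (aug A B *v W t)) (at t)"
    using bounded_linear.has_vector_derivative[OF bl_topv W'[of t]] .
  then show ?thesis by (simp add: aug_top bu sol_def W_def[symmetric])
qed

lemma sol_0: "sol A B x u 0 = x"
  by (simp add: sol_def mexp_0)

lemma traj_sol: "traj A B x u = sol A B x u"
  unfolding traj_def
proof (rule the_equality)
  show "sol A B x u 0 = x \<and> (\<forall>t. (sol A B x u has_vector_derivative A *v sol A B x u t + B *v u) (at t))"
    using sol_0 sol_deriv by blast
next
  fix y assume y: "y 0 = x \<and> (\<forall>t. (y has_vector_derivative A *v y t + B *v u) (at t))"
  show "y = sol A B x u"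
  proof
    fix t show "y t = sol A B x u t"
    proof (rule ode_unique[where A = A and c = "B *v u"])
      show "\<And>t. (y has_vector_derivative A *v y t + B *v u) (at t)" using y by blast
      show "\<And>t. (sol A B x u has_vector_derivative A *v sol A B x u t + B *v u) (at t)"
        using sol_deriv by blast
      show "y 0 = sol A B x u 0" using y sol_0[of A B x u] by simp
    qed
  qed
qed

lemma traj_deriv: "(traj A B x u has_vector_derivative (A *v traj A B x u t + B *v u)) (at t)"
  using sol_deriv[of A B x u t] by (simp add: traj_sol)
lemma traj_0: "traj A B x u 0 = x"
  by (simp add: traj_sol sol_0)



lemma inner_transpose: "x \<bullet> (transpose M *v y) = (M *v x) \<bullet> (y::real^'m)" for M :: "real^'n^'m"
  by (metis dot_lmul_matrix inner_commute transpose_matrix_vector)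

lemma inner_vmul: "x \<bullet> (v v* M) = (M *v x) \<bullet> (v::real^'m)" for M :: "real^'n^'m"
  by (metis dot_lmul_matrix inner_commute)

lemma pos_deriv_nonneg:
  fixes \<phi> :: "real \<Rightarrow> real"
  assumes d: "(\<phi> has_real_derivative D) (at 0 within {0..1})" and D: "D > 0" and z: "\<phi> 0 = 0"
  shows "\<exists>\<delta>>0. \<forall>\<xi>\<in>{0..\<delta>}. \<phi> \<xi> \<ge> 0"
proof -
  have "((\<lambda>y. (\<phi> y - \<phi> 0) / (y - 0)) \<longlongrightarrow> D) (at 0 within {0..1})"
    using d has_field_derivative_iff by blast
  then have "\<forall>\<^sub>F y in at 0 within {0..1}. (\<phi> y - \<phi> 0) / (y - 0) > 0"
    using D order_tendstoD(1) by blast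
  then obtain d where d: "d > 0" "\<And>y. y \<in> {0..1} \<Longrightarrow> y \<noteq> 0 \<Longrightarrow> dist y 0 < d \<Longrightarrow> (\<phi> y - \<phi> 0) / (y - 0) > 0"
    unfolding eventually_at by blast
  show ?thesis
  proof (intro exI[of _ "min 1 (d/2)"] conjI ballI)
    show "min 1 (d/2) > 0" using d by simp
    fix \<xi> assume xi: "\<xi> \<in> {0..min 1 (d/2)}"
    show "\<phi> \<xi> \<ge> 0"
    proof (cases "\<xi> = 0")
      case True then show ?thesis using z by simp
    next
      case False
      with xi d have "\<phi> \<xi> / \<xi> > 0" using d(2)[of \<xi>] z by (auto simp: dist_real_def)
      with xi False show ?thesis by (simp add: zero_less_divide_iff)
    qed
  qed
qed

lemma traj_cont: "continuous_on S (traj A B x u)"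
  by (rule continuous_at_imp_continuous_on) (use traj_deriv has_vector_derivative_continuous in blast)

lemma augv_00: "augv 0 0 = 0" by (simp add: augv_def vec_eq_iff split: sum.splits)

lemma traj_00: "traj A B 0 0 t = 0"
  by (simp add: traj_sol sol_def augv_00 topv_def vec_eq_iff)

lemma part1:
  fixes A :: "real^'n^'n" and B :: "real^'m^'n" and Q :: "real^'n^'n" and R :: "real^'m^'m"
    and Ft :: "real^'n^'m" and Pt :: "real^'n^'n" and \<alpha> :: real and xk :: "real^'n"
  assumes Q: "pos_def Q" and R: "pos_def R" and P: "pos_def Pt"
    and lyap: "transpose (A + B ** Ft) ** Pt + Pt ** (A + B ** Ft) + Q + transpose Ft ** R ** Ft = 0"
    and al: "\<alpha> > 1"
  shows "\<exists>(F::real^'n^'m) \<delta>. \<delta> > 0 \<and> feasible_P1 A B Q R Pt \<alpha> xk F \<delta>"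
proof (cases "xk = 0")
  case True
  show ?thesis
    by (intro exI[of _ Ft] exI[of _ 1]) (simp add: True feasible_P1_def Jcost_def traj_00 Vfun_def)
next
  case False
  define u where "u = Ft *v xk"
  define x where "x = traj A B xk u"
  define y where "y = A *v xk + B *v u"
  define c where "c = xk \<bullet> (Q *v xk) + u \<bullet> (R *v u)"
  have cpos: "c > 0"
  proof -
    have "xk \<bullet> (Q *v xk) > 0" using Q False by (simp add: pos_def_def)
    moreover have "u \<bullet> (R *v u) \<ge> 0" using R by (cases "u = 0") (auto simp: pos_def_def intro: less_imp_le)
    ultimately show ?thesis by (simp add: c_def)
  qed
  have key: "xk \<bullet> (Pt *v y) + y \<bullet> (Pt *v xk) = - c"
  proof -
    have "xk \<bullet> ((transpose (A + B ** Ft) ** Pt + Pt ** (A + B ** Ft) + Q + transpose Ft ** R ** Ft) *v xk) = 0"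
      using lyap by simp
    then have "(A *v xk + B *v u) \<bullet> (Pt *v xk) + xk \<bullet> (Pt *v (A *v xk + B *v u)) + xk \<bullet> (Q *v xk) + u \<bullet> (R *v u) = 0"
      by (simp add: matrix_vector_mult_add_rdistrib matrix_vector_mul_assoc[symmetric] inner_add_right
          inner_vmul u_def)
    then show ?thesis by (simp add: c_def y_def)
  qed
  have xd: "(x has_vector_derivative y) (at 0 within {0..1})"
    using traj_deriv[of A B xk u 0] traj_0[of A B xk u]
    by (simp add: x_def y_def has_vector_derivative_at_within)
  have hV: "((\<lambda>\<xi>. Vfun Pt (x \<xi>)) has_real_derivative (xk \<bullet> (Pt *v y) + y \<bullet> (Pt *v xk))) (at 0 within {0..1})"
  proof -
    have "((\<lambda>t. Pt *v x t) has_vector_derivative Pt *v y) (at 0 within {0..1})"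
      using bounded_linear.has_vector_derivative[OF matrix_vector_mul_bounded_linear xd] .
    from bounded_bilinear.has_vector_derivative[OF bounded_bilinear_inner xd this]
    show ?thesis
      using traj_0[of A B xk u]
      by (simp add: Vfun_def has_real_derivative_iff_has_vector_derivative x_def)
  qed
  have hJ: "((\<lambda>\<xi>. Jcost A B Q R Ft \<xi> xk) has_real_derivative c) (at 0 within {0..1})"
  proof -
    have cont: "continuous_on {0..1} (\<lambda>t. x t \<bullet> (Q *v x t) + u \<bullet> (R *v u))"
      by (intro continuous_intros bounded_linear.continuous_on[OF matrix_vector_mul_bounded_linear]
          traj_cont[of _ A B xk u, folded x_def])
    have "((\<lambda>\<xi>. integral {0..\<xi>} (\<lambda>t. x t \<bullet> (Q *v x t) + u \<bullet> (R *v u))) has_vector_derivative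
        (x 0 \<bullet> (Q *v x 0) + u \<bullet> (R *v u))) (at 0 within {0..1})"
      by (rule integral_has_vector_derivative[OF cont]) simp
    then show ?thesis
      using traj_0[of A B xk u]
      by (simp add: Jcost_def has_real_derivative_iff_has_vector_derivative x_def u_def c_def)
  qed
  define \<phi> where "\<phi> \<xi> = \<alpha> * (Vfun Pt xk - Vfun Pt (x \<xi>)) - Jcost A B Q R Ft \<xi> xk" for \<xi>
  have "(\<phi> has_real_derivative (\<alpha> * (0 - (xk \<bullet> (Pt *v y) + y \<bullet> (Pt *v xk))) - c)) (at 0 within {0..1})"
    unfolding \<phi>_def[abs_def] by (intro DERIV_diff DERIV_cmult DERIV_const hV hJ)
  moreover have "\<alpha> * (0 - (xk \<bullet> (Pt *v y) + y \<bullet> (Pt *v xk))) - c = (\<alpha> - 1) * c"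
    using key by (simp add: algebra_simps)
  moreover have "(\<alpha> - 1) * c > 0" using al cpos by simp
  moreover have "\<phi> 0 = 0" using traj_0[of A B xk u] by (simp add: \<phi>_def x_def Jcost_def)
  ultimately obtain \<delta> where "\<delta> > 0" "\<forall>\<xi>\<in>{0..\<delta>}. \<phi> \<xi> \<ge> 0"
    using pos_deriv_nonneg[of \<phi>] by metis
  then show ?thesis
    by (intro exI[of _ Ft] exI[of _ \<delta>]) (auto simp: feasible_P1_def \<phi>_def x_def u_def)
qed



lemma sum_pair_UNIV: "(\<Sum>p\<in>(UNIV::('a::finite \<times> 'b::finite) set). f p) = (\<Sum>a\<in>UNIV. \<Sum>b\<in>UNIV. f (a,b))"
  by (simp add: sum.cartesian_product UNIV_Times_UNIV[symmetric] del: UNIV_Times_UNIV)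

lemma I2: "vecm (G ** outer x) \<bullet> vecm F = (F *v x) \<bullet> (G *v x)"
  for F :: "real^'n^'m" and G :: "real^'n^'m" and x :: "real^'n"
  apply (simp add: inner_vec_def matrix_vector_mult_def matrix_matrix_mult_def outer_def vecm_def sum_pair_UNIV
      sum_distrib_left sum_distrib_right)
  apply (rule trans[OF sum.swap])
  apply (rule sum.cong[OF refl])
  apply (rule trans[OF sum.swap])
  apply (rule sum.cong[OF refl])
  apply (rule sum.cong[OF refl])
  apply (simp add: mult_ac)
  done

lemma kron_vecm: "kron (outer x) H *v vecm F = vecm ((H ** F) ** outer x)"
  for F :: "real^'n^'m" and H :: "real^'m^'m" and x :: "real^'n"
  apply (simp add: vec_eq_iff matrix_vector_mult_def matrix_matrix_mult_def kron_def outer_def vecm_def sum_pair_UNIV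
      sum_distrib_left sum_distrib_right)
  apply (intro allI sum.cong[OF refl])
  apply (simp add: mult_ac)
  done

lemma I1: "vecm F \<bullet> (kron (outer x) H *v vecm F) = (F *v x) \<bullet> (H *v (F *v x))"
  for F :: "real^'n^'m" and H :: "real^'m^'m" and x :: "real^'n"
  by (simp add: kron_vecm inner_commute[of "vecm F"] I2 matrix_vector_mul_assoc)

lemma transpose_zero[simp]: "transpose (0::real^'n^'m) = 0"
  by (simp add: transpose_def vec_eq_iff)

lemma mm_deriv:
  fixes f :: "real \<Rightarrow> real^'n^'m" and g :: "real \<Rightarrow> real^'p^'n"
  shows "(f has_vector_derivative f') (at x within s) \<Longrightarrow> (g has_vector_derivative g') (at x within s) \<Longrightarrow>
    ((\<lambda>x. f x ** g x) has_vector_derivative (f x ** g' + f' ** g x)) (at x within s)"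
  by (rule bounded_bilinear.has_vector_derivative[OF bb_mm])

lemma tr_deriv:
  fixes f :: "real \<Rightarrow> real^'n^'m"
  shows "(f has_vector_derivative f') F \<Longrightarrow> ((\<lambda>x. transpose (f x)) has_vector_derivative transpose f') F"
  by (rule bounded_linear.has_vector_derivative[OF bl_transpose])

lemma sc_deriv:
  fixes f :: "real \<Rightarrow> real^'n^'m"
  shows "(f has_vector_derivative f') F \<Longrightarrow> ((\<lambda>x. c *\<^sub>R f x) has_vector_derivative c *\<^sub>R f') F"
  by (rule bounded_linear.has_vector_derivative[OF bounded_linear_scaleR_right])

lemma mm_cont:
  fixes f :: "real \<Rightarrow> real^'n^'m" and g :: "real \<Rightarrow> real^'p^'n"
  shows "continuous_on s f \<Longrightarrow> continuous_on s g \<Longrightarrow> continuous_on s (\<lambda>x. f x ** g x)"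
  by (rule bounded_bilinear.continuous_on[OF bb_mm])

lemma tr_cont:
  fixes f :: "real \<Rightarrow> real^'n^'m"
  shows "continuous_on s f \<Longrightarrow> continuous_on s (\<lambda>x. transpose (f x))"
  by (rule bounded_linear.continuous_on[OF bl_transpose])

lemma bl_imv: "bounded_linear (\<lambda>M::real^'n^'m. u \<bullet> (M *v v))"
  by (rule bounded_linear_compose[OF bounded_linear_inner_right bl_mv])

lemma imv_deriv:
  fixes N :: "real \<Rightarrow> real^'n^'m"
  assumes "(N has_vector_derivative N') F"
  shows "((\<lambda>x. u \<bullet> (N x *v v)) has_real_derivative u \<bullet> (N' *v v)) F"
  using bounded_linear.has_vector_derivative[OF bl_imv assms, of u v]
  by (simp add: has_real_derivative_iff_has_vector_derivative)

lemma sym_inner: "transpose P = P \<Longrightarrow> x \<bullet> (P *v y) = y \<bullet> (P *v (x::real^'n))" for P :: "real^'n^'n"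
  by (metis inner_commute inner_transpose)



lemma part2:
  fixes A :: "real^'n^'n" and B :: "real^'m^'n" and Q :: "real^'n^'n" and R :: "real^'m^'m"
    and Ft :: "real^'n^'m" and Pt :: "real^'n^'n" and \<alpha> :: real and xk :: "real^'n"
  assumes Q: "pos_def Q" and R: "pos_def R" and P: "pos_def Pt"
    and lyap: "transpose (A + B ** Ft) ** Pt + Pt ** (A + B ** Ft) + Q + transpose Ft ** R ** Ft = 0"
    and al: "\<alpha> > 1"
  shows "\<exists>(f::real^('n \<times> 'm)) \<delta>. \<delta> > 0 \<and> feasible_P3 A B Q R Pt \<alpha> xk f \<delta>"
proof (cases "xk = 0")
  case True
  show ?thesis
    by (intro exI[of _ 0] exI[of _ 1]) (simp add: True feasible_P3_def r1v_def)
next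
  case False
  define u where "u = Ft *v xk"
  define c where "c = xk \<bullet> (Q *v xk) + u \<bullet> (R *v u)"
  have cpos: "c > 0"
  proof -
    have "xk \<bullet> (Q *v xk) > 0" using Q False by (simp add: pos_def_def)
    moreover have "u \<bullet> (R *v u) \<ge> 0" using R by (cases "u = 0") (auto simp: pos_def_def intro: less_imp_le)
    ultimately show ?thesis by (simp add: c_def)
  qed
  have Psym: "transpose Pt = Pt" using P by (simp add: pos_def_def)
  have lyx: "(A *v xk + B *v u) \<bullet> (Pt *v xk) + xk \<bullet> (Pt *v (A *v xk + B *v u)) + xk \<bullet> (Q *v xk) + u \<bullet> (R *v u) = 0"
  proof -
    have "xk \<bullet> ((transpose (A + B ** Ft) ** Pt + Pt ** (A + B ** Ft) + Q + transpose Ft ** R ** Ft) *v xk) = 0"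
      using lyap by simp
    then show ?thesis
      by (simp add: matrix_vector_mult_add_rdistrib matrix_vector_mul_assoc[symmetric] inner_add_right
          inner_vmul u_def)
  qed
  define E where "E \<xi> = mexp (\<xi> *\<^sub>R A)" for \<xi>
  define Et where "Et \<xi> = mexp (\<xi> *\<^sub>R transpose A)" for \<xi>
  define Em where "Em s = mexp ((- s) *\<^sub>R A)" for s
  define Z where "Z = Zm A"
  let ?F = "at (0::real) within {0..1}"
  have E0: "E 0 = mat 1" "Et 0 = mat 1" "Em 0 = mat 1" by (simp_all add: E_def Et_def Em_def mexp_0)
  have dE: "(E has_vector_derivative A) ?F"
    using mexp_deriv[of A 0] by (simp add: E_def[abs_def] mexp_0 has_vector_derivative_at_within)
  have dEt: "(Et has_vector_derivative transpose A) ?F"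
    using mexp_deriv[of "transpose A" 0] by (simp add: Et_def[abs_def] mexp_0 has_vector_derivative_at_within)
  have cE: "continuous_on {0..1} E" unfolding E_def by (rule mexp_cont)
  have cEt: "continuous_on {0..1} Et" unfolding Et_def by (rule mexp_cont)
  have cEm: "continuous_on {0..1} Em"
    using mexp_cont[of "{0..1}" "-A"] by (simp add: Em_def)
  have Zi: "Z = (\<lambda>\<tau>. integral {0..\<tau>} Em)" by (simp add: Z_def Zm_def[abs_def] Em_def[abs_def])
  have dZall: "(Z has_vector_derivative Em \<tau>) (at \<tau> within {0..1})" if "\<tau> \<in> {0..1}" for \<tau>
    unfolding Zi by (rule integral_has_vector_derivative[OF cEm that])
  have dZ: "(Z has_vector_derivative mat 1) ?F" using dZall[of 0] E0 by simp
  have cZ: "continuous_on {0..1} Z"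
    using dZall has_vector_derivative_continuous continuous_on_eq_continuous_within by blast
  have Z0: "Z 0 = 0" by (simp add: Zi)
  have dH0: "(H0 A Q has_vector_derivative Q) ?F"
  proof -
    have cont: "continuous_on {0..1} (\<lambda>\<tau>. Et \<tau> ** Q ** E \<tau>)"
      by (intro mm_cont cE cEt continuous_on_const)
    have "((\<lambda>\<xi>. integral {0..\<xi>} (\<lambda>\<tau>. Et \<tau> ** Q ** E \<tau>)) has_vector_derivative (Et 0 ** Q ** E 0)) ?F"
      by (rule integral_has_vector_derivative[OF cont]) simp
    then show ?thesis by (simp add: H0_def[abs_def] E_def Et_def mexp_0)
  qed
  have dH1: "(H1 A B Q has_vector_derivative 0) ?F"
  proof -
    have cont: "continuous_on {0..1} (\<lambda>\<tau>. Et \<tau> ** Q ** E \<tau> ** Z \<tau> ** B)"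
      by (intro mm_cont cE cEt cZ continuous_on_const)
    have "((\<lambda>\<xi>. integral {0..\<xi>} (\<lambda>\<tau>. Et \<tau> ** Q ** E \<tau> ** Z \<tau> ** B)) has_vector_derivative (Et 0 ** Q ** E 0 ** Z 0 ** B)) ?F"
      by (rule integral_has_vector_derivative[OF cont]) simp
    then show ?thesis by (simp add: H1_def[abs_def] E_def Et_def Z_def[symmetric] Z0)
  qed
  have dH2: "(H2 A B Q R has_vector_derivative R) ?F"
  proof -
    have cont: "continuous_on {0..1} (\<lambda>\<tau>. transpose (E \<tau> ** Z \<tau> ** B) ** Q ** (E \<tau> ** Z \<tau> ** B))"
      by (intro mm_cont tr_cont cE cZ continuous_on_const)
    have "((\<lambda>\<xi>. integral {0..\<xi>} (\<lambda>\<tau>. transpose (E \<tau> ** Z \<tau> ** B) ** Q ** (E \<tau> ** Z \<tau> ** B))) has_vector_derivative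
        (transpose (E 0 ** Z 0 ** B) ** Q ** (E 0 ** Z 0 ** B))) ?F"
      by (rule integral_has_vector_derivative[OF cont]) simp
    then have i: "((\<lambda>\<xi>. integral {0..\<xi>} (\<lambda>\<tau>. transpose (E \<tau> ** Z \<tau> ** B) ** Q ** (E \<tau> ** Z \<tau> ** B))) has_vector_derivative 0) ?F"
      by (simp add: Z0)
    have r: "((\<lambda>\<xi>. \<xi> *\<^sub>R R) has_vector_derivative 1 *\<^sub>R R) ?F"
      by (rule bounded_linear.has_vector_derivative[OF bounded_linear_scaleR_left has_vector_derivative_id])
    from has_vector_derivative_add[OF i r] show ?thesis
      by (simp add: H2_def[abs_def] E_def[symmetric] Z_def[symmetric])
  qed
  define N where "N \<xi> = H2 A B Q R \<xi> + \<alpha> *\<^sub>R (transpose B ** transpose (Z \<xi>) ** Et \<xi> ** Pt ** E \<xi> ** Z \<xi> ** B)" for \<xi>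
  define G where "G \<xi> = transpose (H1 A B Q \<xi>) + \<alpha> *\<^sub>R (transpose B ** transpose (Z \<xi>) ** Et \<xi> ** Pt ** E \<xi>)" for \<xi>
  define K where "K \<xi> = H0 A Q \<xi> + \<alpha> *\<^sub>R (Et \<xi> ** Pt ** E \<xi> - Pt)" for \<xi>
  have dN: "(N has_vector_derivative R) ?F"
    unfolding N_def[abs_def]
    apply (rule has_vector_derivative_eq_rhs)
    apply (rule has_vector_derivative_add)
    apply (rule dH2)
    apply (rule sc_deriv)
    apply (rule mm_deriv)+
    apply (rule has_vector_derivative_const)
    apply (rule tr_deriv)
    apply (rule dZ)
    apply (rule dEt)
    apply (rule has_vector_derivative_const)
    apply (rule dE)
    apply (rule dZ)
    apply (rule has_vector_derivative_const)
    apply (simp add: Z0)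
    done
  have dG: "(G has_vector_derivative \<alpha> *\<^sub>R (transpose B ** Pt)) ?F"
    unfolding G_def[abs_def]
    apply (rule has_vector_derivative_eq_rhs)
    apply (rule has_vector_derivative_add)
    apply (rule tr_deriv)
    apply (rule dH1)
    apply (rule sc_deriv)
    apply (rule mm_deriv)+
    apply (rule has_vector_derivative_const)
    apply (rule tr_deriv)
    apply (rule dZ)
    apply (rule dEt)
    apply (rule has_vector_derivative_const)
    apply (rule dE)
    apply (simp add: Z0 E0)
    done
  have dK: "(K has_vector_derivative Q + \<alpha> *\<^sub>R (transpose A ** Pt + Pt ** A)) ?F"
    unfolding K_def[abs_def]
    apply (rule has_vector_derivative_eq_rhs)
    apply (rule has_vector_derivative_add)
    apply (rule dH0)
    apply (rule sc_deriv)
    apply (rule has_vector_derivative_diff)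
    apply (rule mm_deriv)+
    apply (rule dEt)
    apply (rule has_vector_derivative_const)
    apply (rule dE)
    apply (rule has_vector_derivative_const)
    apply (simp add: E0 algebra_simps)
    done
  define g where "g \<xi> = u \<bullet> (N \<xi> *v u) + 2 * (u \<bullet> (G \<xi> *v xk)) + xk \<bullet> (K \<xi> *v xk)" for \<xi>
  have geq: "(1/2) * (vecm Ft \<bullet> (P1m A B Q R Pt \<alpha> xk \<xi> *v vecm Ft)) + q1v A B Q Pt \<alpha> xk \<xi> \<bullet> vecm Ft
      + r1v A Q Pt \<alpha> xk \<xi> = g \<xi>" for \<xi>
    by (simp add: P1m_def q1v_def r1v_def scaleR_matrix_vector_assoc[symmetric] I1 I2 g_def N_def G_def K_def
        E_def Et_def Z_def u_def)
  have dg: "(g has_real_derivative (u \<bullet> (R *v u) + 2 * (u \<bullet> ((\<alpha> *\<^sub>R (transpose B ** Pt)) *v xk))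
      + xk \<bullet> ((Q + \<alpha> *\<^sub>R (transpose A ** Pt + Pt ** A)) *v xk))) ?F"
    unfolding g_def[abs_def]
    by (intro DERIV_add DERIV_cmult imv_deriv dN dG dK)
  have "u \<bullet> (R *v u) + 2 * (u \<bullet> ((\<alpha> *\<^sub>R (transpose B ** Pt)) *v xk))
      + xk \<bullet> ((Q + \<alpha> *\<^sub>R (transpose A ** Pt + Pt ** A)) *v xk) = (1 - \<alpha>) * c"
  proof -
    have s: "(B *v u) \<bullet> (Pt *v xk) = xk \<bullet> (Pt *v (B *v u))" using sym_inner[OF Psym] by metis
    have "u \<bullet> (R *v u) + 2 * (u \<bullet> ((\<alpha> *\<^sub>R (transpose B ** Pt)) *v xk))
      + xk \<bullet> ((Q + \<alpha> *\<^sub>R (transpose A ** Pt + Pt ** A)) *v xk)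
      = u \<bullet> (R *v u) + xk \<bullet> (Q *v xk) + \<alpha> * (2 * ((B *v u) \<bullet> (Pt *v xk)) + (A *v xk) \<bullet> (Pt *v xk) + xk \<bullet> (Pt *v (A *v xk)))"
      by (simp add: matrix_vector_mult_add_rdistrib matrix_vector_mul_assoc[symmetric] inner_add_right
          inner_vmul scaleR_matrix_vector_assoc[symmetric] algebra_simps)
    also have "\<dots> = (1 - \<alpha>) * c + \<alpha> * ((A *v xk) \<bullet> (Pt *v xk) + (B *v u) \<bullet> (Pt *v xk)
        + xk \<bullet> (Pt *v (A *v xk)) + xk \<bullet> (Pt *v (B *v u)) + xk \<bullet> (Q *v xk) + u \<bullet> (R *v u))"
      using s by (simp add: c_def algebra_simps)
    also have "(A *v xk) \<bullet> (Pt *v xk) + (B *v u) \<bullet> (Pt *v xk)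
        + xk \<bullet> (Pt *v (A *v xk)) + xk \<bullet> (Pt *v (B *v u)) + xk \<bullet> (Q *v xk) + u \<bullet> (R *v u) = 0"
      using lyx by (simp add: inner_add_left inner_add_right matrix_vector_right_distrib algebra_simps)
    finally show ?thesis by simp
  qed
  with dg have "(g has_real_derivative (1 - \<alpha>) * c) ?F" by simp
  then have "((\<lambda>\<xi>. - g \<xi>) has_real_derivative - ((1 - \<alpha>) * c)) ?F" by (rule DERIV_minus)
  then have dg': "((\<lambda>\<xi>. - g \<xi>) has_real_derivative (\<alpha> - 1) * c) ?F"
    by (rule DERIV_cong) (simp add: algebra_simps)
  have g0: "g 0 = 0"
    by (simp add: g_def N_def G_def K_def Z0 E0 H0_def H1_def H2_def)
  obtain \<delta> where "\<delta> > 0" "\<forall>\<xi>\<in>{0..\<delta>}. - g \<xi> \<ge> 0"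
    using pos_deriv_nonneg[OF dg'] al cpos g0 by auto
  then show ?thesis
    by (intro exI[of _ "vecm Ft"] exI[of _ \<delta>]) (simp only: feasible_P3_def geq, auto)
qed


theorem theorem5:
  fixes A :: "real^'n^'n" and B :: "real^'m^'n" and Q :: "real^'n^'n" and R :: "real^'m^'m"
    and Ft :: "real^'n^'m" and Pt :: "real^'n^'n" and \<gamma> \<eta> \<alpha> :: real and xk :: "real^'n"
  assumes "stabilizable A B"
    and "pos_def Q" and "pos_def R"
    and "\<gamma> \<ge> 0" and "\<eta> \<ge> 0"
    and "hurwitz (A + B ** Ft)"
    and "pos_def Pt"
    and "transpose (A + B ** Ft) ** Pt + Pt ** (A + B ** Ft) + Q + transpose Ft ** R ** Ft = 0"
    and "\<alpha> > 1"
  shows "(\<exists>(F::real^'n^'m) \<delta>. \<delta> > 0 \<and> feasible_P1 A B Q R Pt \<alpha> xk F \<delta>)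
       \<and> (\<exists>(f::real^('n \<times> 'm)) \<delta>. \<delta> > 0 \<and> feasible_P3 A B Q R Pt \<alpha> xk f \<delta>)"
  using part1[OF assms(2,3,7,8,9)] part2[OF assms(2,3,7,8,9)] by blast

end
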